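(* For every $j\in\mathsf{R}\setminus\mathsf{R}'$ it holds: $\mathrm{Lroot}(j-1)=\mathrm{Lroot}(j)$, $\mathrm{end}(j-1)=\mathrm{end}(j)$, $\mathrm{Ltail}(j-1)=\mathrm{Ltail}(j)$, $\mathrm{efull}(j-1)=\mathrm{efull}(j)$, and $\mathrm{type}(j-1)=\mathrm{type}(j)$.
   Context: $T\in[0\mathinner{.\,.}\sigma)^n$ with $2\le\sigma<n^{1/7}$; $\tau=\lfloor\mu\log_\sigma n\rfloor$ for a fixed positive constant $\mu<1/6$ with $\tau\ge1$. $\mathrm{per}(S)$ is the shortest period of $S$. $\mathsf{R}=\{i\in[1\mathinner{.\,.}n-3\tau+2]:\mathrm{per}(T[i\mathinner{.\,.}i+3\tau-2])\le\tau/3\}$ and $\mathsf{R}'=\{j\in\mathsf{R}:j-1\notin\mathsf{R}\}$. For $j\in\mathsf{R}$: $\mathrm{end}(j)=\min\{j'\ge j:j'\notin\mathsf{R}\}+3\tau-2$; with $p=\mathrm{per}(T[j\mathinner{.\,.}j+3\tau-1))$, $\mathrm{Lroot}(j)=\min\{T[j+t\mathinner{.\,.}j+t+p):t\in[0\mathinner{.\,.}p)\}$ (lexicographic minimum); with $H=\mathrm{Lroot}(j)$, $T[j\mathinner{.\,.}\mathrm{end}(j))$ is uniquely written as $H'H^kH''$ with $H'$ a proper suffix and $H''$ a proper prefix of $H$, and $\mathrm{Ltail}(j)=|H''|$; $\mathrm{efull}(j)=\mathrm{end}(j)-\mathrm{Ltail}(j)$; $\mathrm{type}(j)=+1$ if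 $\mathrm{end}(j)\le n$ and $T[\mathrm{end}(j)]\succ T[\mathrm{end}(j)-|H|]$, and $\mathrm{type}(j)=-1$ otherwise. *)

theory Defs
  imports Complex_Main "HOL-Library.List_Lexorder" "HOL-Library.Sublist"
begin

text \<open>Texts are lists; positions are 1-based as in the paper: T[i] = T ! (i-1).
  sub T i j is the fragment T[i..j) (half-open, 1-based).\<close>

definition chr :: "nat list \<Rightarrow> nat \<Rightarrow> nat" where
  "chr T i = T ! (i - 1)"

definition sub :: "nat list \<Rightarrow> nat \<Rightarrow> nat \<Rightarrow> nat list" where
  "sub T i j = take (j - i) (drop (i - 1) T)"

definition per :: "nat list \<Rightarrow> nat" where
  "per S = (LEAST p. 0 < p \<and> (\<forall>k. k + p < length S \<longrightarrow> S ! k = S ! (k + p)))"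

definition Rset :: "nat list \<Rightarrow> nat \<Rightarrow> nat set" where
  "Rset T \<tau> = {i. 1 \<le> i \<and> i + 3 * \<tau> \<le> length T + 2 \<and>
      real (per (sub T i (i + 3 * \<tau> - 1))) \<le> real \<tau> / 3}"

definition Rprime :: "nat list \<Rightarrow> nat \<Rightarrow> nat set" where
  "Rprime T \<tau> = {j \<in> Rset T \<tau>. j - 1 \<notin> Rset T \<tau>}"

definition run_end :: "nat list \<Rightarrow> nat \<Rightarrow> nat \<Rightarrow> nat" where
  "run_end T \<tau> j = (LEAST j'. j \<le> j' \<and> j' \<notin> Rset T \<tau>) + 3 * \<tau> - 2"

definition Lroot :: "nat list \<Rightarrow> nat \<Rightarrow> nat \<Rightarrow> nat list" where
  "Lroot T \<tau> j = (let p = per (sub T j (j + 3 * \<tau> - 1))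
     in Min {sub T (j + t) (j + t + p) | t. t < p})"

definition Ltail :: "nat list \<Rightarrow> nat \<Rightarrow> nat \<Rightarrow> nat" where
  "Ltail T \<tau> j = (THE l. \<exists>H' k H''.
      sub T j (run_end T \<tau> j) = H' @ concat (replicate k (Lroot T \<tau> j)) @ H'' \<and>
      strict_suffix H' (Lroot T \<tau> j) \<and> strict_prefix H'' (Lroot T \<tau> j) \<and>
      l = length H'')"

definition efull :: "nat list \<Rightarrow> nat \<Rightarrow> nat \<Rightarrow> nat" where
  "efull T \<tau> j = run_end T \<tau> j - Ltail T \<tau> j"

definition rtype :: "nat list \<Rightarrow> nat \<Rightarrow> nat \<Rightarrow> int" where
  "rtype T \<tau> j = (if run_end T \<tau> j \<le> length T \<and>
        chr T (run_end T \<tau> j) > chr T (run_end T \<tau> j - length (Lroot T \<tau> j))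
      then 1 else -1)"

end

theory Submission
  imports Defs
begin

definition hp :: "nat list \<Rightarrow> nat \<Rightarrow> bool" where
  "hp x p = (\<forall>k. k + p < length x \<longrightarrow> x ! k = x ! (k + p))"

lemma per_props:
  assumes "1 \<le> length x"
  shows "0 < per x" "hp x (per x)" "\<And>d. 0 < d \<Longrightarrow> hp x d \<Longrightarrow> per x \<le> d"
proof -
  have ex: "0 < length x \<and> hp x (length x)" using assms by (auto simp: hp_def)
  have "0 < per x \<and> hp x (per x)"
    unfolding per_def hp_def[symmetric] by (rule LeastI[of _ "length x"]) (use ex in auto)
  then show "0 < per x" "hp x (per x)" by auto
  fix d assume "0 < d" "hp x d"
  then show "per x \<le> d" unfolding per_def hp_def[symmetric] by (intro Least_le) auto
qed

lemma hp_mod: "hp x p \<Longrightarrow> i < length x \<Longrightarrow> x ! i = x ! (i mod p)"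
proof (induction i rule: less_induct)
  case (less i)
  show ?case
  proof (cases "i < p")
    case True then show ?thesis by simp
  next
    case False
    show ?thesis
    proof (cases "p = 0")
      case True then show ?thesis by simp
    next
      case p0: False
    have "x ! (i - p) = x ! (i - p + p)" using spec[OF less.prems(1)[unfolded hp_def], of "i - p"] False less.prems(2) by simp
    then have e1: "x ! i = x ! (i - p)" using False by simp
    have lt: "i - p < i" using False p0 by simp
    have lt2: "i - p < length x" using less.prems(2) by simp
    have e2: "x ! (i - p) = x ! ((i - p) mod p)" by (rule less.IH[OF lt less.prems(1) lt2])
    have e3: "(i - p) mod p = i mod p" using False by (simp add: le_mod_geq)
    show ?thesis unfolding e1 e2 e3 ..
    qed
  qed
qed

lemma hp_cong: "hp x p \<Longrightarrow> i < length x \<Longrightarrow> i' < length x \<Longrightarrow> i mod p = i' mod p \<Longrightarrow> x ! i = x ! i'"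
  using hp_mod[of x p i] hp_mod[of x p i'] by simp

lemma hp_dvd:
  assumes "hp x g" "g dvd q" shows "hp x q"
  unfolding hp_def
proof (intro allI impI)
  fix k assume "k + q < length x"
  moreover have "(k + q) mod g = k mod g" using \<open>g dvd q\<close>
    using mod_add_right_eq[of k q g] by simp
  ultimately show "x ! k = x ! (k + q)" using hp_cong[OF assms(1), of k "k + q"] by simp
qed

lemma hp_at: "hp x p \<Longrightarrow> k + p < length x \<Longrightarrow> x ! k = x ! (k + p)"
  unfolding hp_def by blast

lemma fw_step:
  assumes hp1: "hp x p" and hp2: "hp x q" and pq: "p < q" and len: "p + q \<le> length x"
  shows "hp x (q - p)"
  unfolding hp_def
proof (intro allI impI)
  fix i assume i: "i + (q - p) < length x"
  show "x ! i = x ! (i + (q - p))"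
  proof (cases "p \<le> i")
    case True
    have a1: "x ! i = x ! (i - p)" using hp_at[OF hp1, of "i - p"] True i pq by simp
    have a2: "x ! (i - p) = x ! (i - p + q)" using hp_at[OF hp2, of "i - p"] True i pq by simp
    have a3: "i - p + q = i + (q - p)" using True pq by simp
    show ?thesis using a1 a2 a3 by simp
  next
    case False
    have a1: "x ! i = x ! (i + q)" using hp_at[OF hp2, of i] False len by simp
    have a2: "x ! (i + (q - p)) = x ! (i + (q - p) + p)" using hp_at[OF hp1, of "i + (q - p)"] False len pq by simp
    have a3: "i + (q - p) + p = i + q" using pq by simp
    show ?thesis using a1 a2 a3 by simp
  qed
qed

lemma fw: "hp x p \<Longrightarrow> hp x q \<Longrightarrow> p + q \<le> length x \<Longrightarrow> hp x (gcd p q)"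
proof (induction "p + q" arbitrary: p q rule: less_induct)
  case less
  show ?case
  proof (cases "p = 0 \<or> q = 0 \<or> p = q")
    case True then show ?thesis using less.prems by auto
  next
    case False
    show ?thesis
    proof (cases "p < q")
      case True
      have "hp x (q - p)" using fw_step[OF less.prems(1,2) True less.prems(3)] .
      then have "hp x (gcd p (q - p))" using less True False by (intro less.hyps) auto
      moreover have "gcd p (q - p) = gcd p q" using True gcd_diff1_nat[of p q] by (simp add: gcd.commute)
      ultimately show ?thesis by simp
    next
      case nq: False
      then have qp: "q < p" using False by auto
      have "hp x (p - q)" using fw_step[OF less.prems(2,1) qp] less.prems(3) by simp
      then have "hp x (gcd (p - q) q)" using less qp False by (intro less.hyps) auto
      moreover have "gcd (p - q) q = gcd p q" using qp gcd_diff1_nat[of q p] by simp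
      ultimately show ?thesis by simp
    qed
  qed
qed


lemma hp_drop: "hp x p \<Longrightarrow> hp (drop m x) p"
  unfolding hp_def by (auto simp: add.assoc)
lemma hp_take: "hp x p \<Longrightarrow> hp (take m x) p"
  unfolding hp_def by auto

lemma ext_front:
  assumes "hp y q" "hp (drop 1 y) g" "g dvd q" "0 < q" "q < length y" "0 < g"
  shows "hp y g"
  unfolding hp_def
proof (intro allI impI)
  fix k assume k: "k + g < length y"
  show "y ! k = y ! (k + g)"
  proof (cases k)
    case (Suc k')
    then show ?thesis using assms(2) k unfolding hp_def by auto
  next
    case 0
    obtain c where c: "q = g * c" using assms(3) by auto
    with assms have "c \<ge> 1" by (cases c) auto
    have "y ! 0 = y ! q" using assms(1,5) unfolding hp_def by auto
    also have "\<dots> = (drop 1 y) ! (q - 1)" using assms(4,5) by auto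
    also have "\<dots> = (drop 1 y) ! (g - 1)"
    proof (rule hp_cong[OF assms(2)])
      show "q - 1 < length (drop 1 y)" "g - 1 < length (drop 1 y)" using assms k 0 by auto
      have "q - 1 = (g - 1) + g * (c - 1)" using c \<open>c \<ge> 1\<close> assms(6)
        by (cases c) (auto simp: algebra_simps)
      then show "(q - 1) mod g = (g - 1) mod g" by simp
    qed
    also have "\<dots> = y ! g" using assms(6) k by auto
    finally show ?thesis using 0 by simp
  qed
qed

lemma ext_back:
  assumes "hp y q" "hp (take (length y - 1) y) g" "g dvd q" "0 < q" "q < length y" "0 < g"
  shows "hp y g"
  unfolding hp_def
proof (intro allI impI)
  fix k assume k: "k + g < length y"
  show "y ! k = y ! (k + g)"
  proof (cases "k + g < length y - 1")
    case True
    then show ?thesis using assms(2) k unfolding hp_def by auto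
  next
    case False
    then have kg: "k + g = length y - 1" using k by auto
    obtain c where c: "q = g * c" using assms(3) by auto
    with assms have "c \<ge> 1" by (cases c) auto
    have "y ! (k + g - q) = y ! (k + g - q + q)" using spec[OF assms(1)[unfolded hp_def], of "k + g - q"] assms(4,5) kg by simp
    then have "y ! (k + g - q) = y ! (k + g)" using assms(4,5) kg by simp
    moreover have "y ! (k + g - q) = y ! k"
    proof -
      have e: "k = (k + g - q) + g * (c - 1)" using c \<open>c \<ge> 1\<close> kg assms(5)
        by (cases c) (auto simp: algebra_simps)
      have "take (length y - 1) y ! (k + g - q) = take (length y - 1) y ! k"
        apply (rule hp_cong[OF assms(2)])
        using kg assms apply auto[2]
        by (subst (2) e) simp
      then show ?thesis using kg assms by auto
    qed
    ultimately show ?thesis by simp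
  qed
qed

lemma adj:
  assumes "length V = Suc W" "2 * per (take W V) + 1 \<le> W" "2 * per (drop 1 V) + 1 \<le> W" "2 \<le> W"
  shows "per (take W V) = per (drop 1 V)"
proof -
  define a where "a = take W V"
  define b where "b = drop 1 V"
  define p1 where "p1 = per a"
  define p2 where "p2 = per b"
  have la: "length a = W" and lb: "length b = W" using assms(1) by (auto simp: a_def b_def)
  have p1: "0 < p1" "hp a p1" using per_props[of a] la assms(4) by (auto simp: p1_def)
  have p2: "0 < p2" "hp b p2" using per_props[of b] lb assms(4) by (auto simp: p2_def)
  define Om where "Om = drop 1 a"
  have O2: "Om = take (W - 1) b" unfolding Om_def a_def b_def by (simp add: drop_take)
  have lO: "length Om = W - 1" using la Om_def by simp
  have hO1: "hp Om p1" using hp_drop[OF p1(2)] Om_def by simp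
  have hO2: "hp Om p2" using hp_take[OF p2(2)] O2 by simp
  define g where "g = gcd p1 p2"
  have g0: "0 < g" using p1 by (simp add: g_def)
  have hOg: "hp Om g" unfolding g_def
    using fw[OF hO1 hO2] lO assms(2,3) by (simp add: p1_def p2_def a_def b_def)
  have "hp a g"
    by (rule ext_front[OF p1(2) _ _ p1(1)]) (use hOg Om_def g0 la assms(2) in \<open>auto simp: g_def p1_def a_def\<close>)
  then have "p1 \<le> g" using per_props(3)[of a g] la assms(4) g0 by (simp add: p1_def)
  moreover have "g \<le> p1" using p1(1) by (simp add: g_def gcd_le1_nat)
  ultimately have e1: "p1 = g" by simp
  have "take (length b - 1) b = Om" using O2 lb by simp
  then have "hp b g"
    using ext_back[OF p2(2) _ _ p2(1)] hOg g0 lb assms(3) by (simp add: g_def p2_def b_def)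
  then have "p2 \<le> g" using per_props(3)[of b g] lb assms(4) g0 by (simp add: p2_def)
  moreover have "g \<le> p2" using p2(1) by (simp add: g_def gcd_le2_nat)
  ultimately have "p2 = g" by simp
  with e1 show ?thesis by (simp add: p1_def p2_def a_def b_def)
qed

lemma union:
  assumes "length U = M + W" "p < W" "\<And>s. s \<le> M \<Longrightarrow> hp (take W (drop s U)) p"
  shows "hp U p"
  unfolding hp_def
proof (intro allI impI)
  fix x assume x: "x + p < length U"
  define s where "s = min x M"
  have "hp (take W (drop s U)) p" using assms(3) s_def by simp
  moreover have "x - s + p < W" using x assms(1,2) s_def by auto
  moreover have "x - s + p < length (take W (drop s U))" using x assms(1,2) s_def by auto
  ultimately have "take W (drop s U) ! (x - s) = take W (drop s U) ! (x - s + p)"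
    unfolding hp_def by blast
  moreover have "s \<le> x" using s_def by simp
  ultimately show "U ! x = U ! (x + p)" using \<open>x - s + p < W\<close> x by auto
qed


lemma nth_concat_rep: "length H = p \<Longrightarrow> i < k * p \<Longrightarrow> concat (replicate k H) ! i = H ! (i mod p)"
proof (induction k arbitrary: i)
  case 0 then show ?case by simp
next
  case (Suc k)
  show ?case
  proof (cases "i < p")
    case True then show ?thesis using Suc.prems by (simp add: nth_append)
  next
    case False
    then have "concat (replicate (Suc k) H) ! i = concat (replicate k H) ! (i - p)"
      using Suc.prems by (simp add: nth_append)
    also have "\<dots> = H ! ((i - p) mod p)" using Suc False by (intro Suc.IH) auto
    also have "(i - p) mod p = i mod p" using False by (simp add: le_mod_geq)
    finally show ?thesis .
  qed
qed

lemma shiftper: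
  assumes "hp U p" "a < a'" "a' < p" "2 * p \<le> length U" "\<And>i. i < p \<Longrightarrow> U ! (a + i) = U ! (a' + i)"
  shows "hp U (a' - a)"
  unfolding hp_def
proof (intro allI impI)
  fix y assume y: "y + (a' - a) < length U"
  define i where "i = (y + p - a) mod p"
  have p0: "0 < p" using assms by auto
  have ip: "i < p" using p0 by (simp add: i_def)
  have m1: "(a + i) mod p = y mod p"
  proof -
    have "(a + i) mod p = (a + (y + p - a)) mod p" unfolding i_def by (simp add: mod_add_right_eq)
    also have "a + (y + p - a) = y + p" using assms by simp
    finally show ?thesis by simp
  qed
  have m2: "(a' + i) mod p = (y + (a' - a)) mod p"
  proof -
    have "(a' + i) mod p = ((a + i) + (a' - a)) mod p" using assms by (simp add: add.commute)
    also have "\<dots> = ((a + i) mod p + (a' - a)) mod p" by (rule mod_add_left_eq[symmetric])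
    also have "\<dots> = (y mod p + (a' - a)) mod p" using m1 by simp
    finally show ?thesis by (simp add: mod_add_left_eq)
  qed
  have "U ! y = U ! (a + i)"
    using hp_cong[OF assms(1), of y "a + i"] m1 y ip assms(2-4) by auto
  also have "\<dots> = U ! (a' + i)" using assms(5) ip by simp
  also have "\<dots> = U ! (y + (a' - a))"
    using hp_cong[OF assms(1), of "a' + i" "y + (a' - a)"] m2 y ip assms(2-4) by auto
  finally show "U ! y = U ! (y + (a' - a))" .
qed

lemma decomp:
  assumes hU: "hp U p" and p0: "0 < p" and L2: "2 * p \<le> length U" and tL: "t + p \<le> length U"
    and nomin: "\<And>d. 0 < d \<Longrightarrow> d < p \<Longrightarrow> \<not> hp U d"
    and H: "H = take p (drop t U)"
  shows "(\<exists>H' k H''. U = H' @ concat (replicate k H) @ H'' \<and> strict_suffix H' H \<and>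
            strict_prefix H'' H \<and> l = length H'') \<longleftrightarrow> l = (length U - t) mod p"
proof -
  define L where "L = length U"
  define a0 where "a0 = t mod p"
  have lH: "length H = p" using H tL by simp
  have Hn: "\<And>i. i < p \<Longrightarrow> H ! i = U ! (t + i)" using H tL by simp
  have a0p: "a0 < p" using p0 by (simp add: a0_def)
  have Ha0: "\<And>i. i < p \<Longrightarrow> H ! i = U ! (a0 + i)"
  proof -
    fix i assume i: "i < p"
    have "(t + i) mod p = (a0 + i) mod p" unfolding a0_def by (simp add: mod_add_left_eq)
    then show "H ! i = U ! (a0 + i)" using Hn[OF i] hp_cong[OF hU, of "t + i" "a0 + i"] tL i a0p L2
      by auto
  qed
  show ?thesis
  proof
    assume "\<exists>H' k H''. U = H' @ concat (replicate k H) @ H'' \<and> strict_suffix H' H \<and>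
            strict_prefix H'' H \<and> l = length H''"
    then obtain H' k H'' where dec: "U = H' @ concat (replicate k H) @ H''"
      and s1: "strict_suffix H' H" and s2: "strict_prefix H'' H" and l: "l = length H''" by blast
    define a where "a = length H'"
    have ap: "a < p" using suffix_length_less[OF s1] lH a_def by simp
    have bp: "l < p" using prefix_length_less[OF s2] lH l by simp
    have Lk: "L = a + k * p + l" using dec lH l a_def L_def by (simp add: length_concat sum_list_replicate)
    have "k \<noteq> 0"
    proof
      assume "k = 0" then show False using Lk ap bp L2 L_def by simp
    qed
    then have dec2: "U = H' @ H @ concat (replicate (k - 1) H) @ H''" using dec
      by (cases k) auto
    have Ua: "\<And>i. i < p \<Longrightarrow> U ! (a + i) = H ! i"
      using dec2 lH a_def by (simp add: nth_append)
    have "a = a0"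
    proof (rule ccontr)
      assume "a \<noteq> a0"
      then consider "a < a0" | "a0 < a" by linarith
      then show False
      proof cases
        case 1
        have "hp U (a0 - a)" by (rule shiftper[OF hU 1 a0p L2]) (simp add: Ua Ha0)
        then show False using nomin[of "a0 - a"] 1 a0p by auto
      next
        case 2
        have "hp U (a - a0)" by (rule shiftper[OF hU 2 ap L2]) (simp add: Ua Ha0)
        then show False using nomin[of "a - a0"] 2 ap by auto
      qed
    qed
    then have "l = (L - a0) mod p" using Lk bp by simp
    moreover have "(L - a0) mod p = (L - t) mod p"
    proof -
      have "t = a0 + p * (t div p)" unfolding a0_def by simp
      moreover have "t \<le> L" using tL L_def by simp
      ultimately have "L - a0 = (L - t) + p * (t div p)" by linarith
      then show ?thesis by simp
    qed
    ultimately show "l = (length U - t) mod p" by (simp add: L_def)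
  next
    assume l: "l = (length U - t) mod p"
    define k where "k = (L - a0) div p"
    define b where "b = (L - a0) mod p"
    have a0L: "a0 \<le> L" using a0p L2 L_def by simp
    have bl: "l = b"
    proof -
      have "t = a0 + p * (t div p)" unfolding a0_def by simp
      moreover have "t \<le> L" using tL L_def by simp
      ultimately have "L - a0 = (L - t) + p * (t div p)" by linarith
      then show ?thesis by (simp add: l b_def L_def)
    qed
    have Lk: "L = a0 + k * p + b" using a0L unfolding k_def b_def by simp
    have bp: "b < p" using p0 b_def by simp
    define H' where "H' = take a0 U"
    define H'' where "H'' = drop (a0 + k * p) U"
    have d1: "U = H' @ concat (replicate k H) @ H''"
    proof (rule nth_equalityI)
      show "length U = length (H' @ concat (replicate k H) @ H'')"
        using Lk lH L_def by (simp add: H'_def H''_def length_concat sum_list_replicate)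
      fix i assume i: "i < length U"
      show "U ! i = (H' @ concat (replicate k H) @ H'') ! i"
      proof (cases "i < a0")
        case True then show ?thesis using Lk L_def by (simp add: H'_def nth_append)
      next
        case False
        note F = False
        show ?thesis
        proof (cases "i < a0 + k * p")
          case True
          have "i - a0 < k * p" using F True by linarith
          have "(H' @ concat (replicate k H) @ H'') ! i = concat (replicate k H) ! (i - a0)"
            using F True Lk L_def lH \<open>i - a0 < k * p\<close> by (simp add: H'_def nth_append length_concat sum_list_replicate)
          also have "\<dots> = H ! ((i - a0) mod p)" using True F lH by (intro nth_concat_rep) auto
          also have "\<dots> = U ! (a0 + (i - a0) mod p)" using Ha0 p0 by simp
          also have "\<dots> = U ! i"
          proof (rule hp_cong[OF hU])
            show "a0 + (i - a0) mod p < length U" using a0p p0 L2 mod_less_divisor[OF p0, of "i - a0"] by linarith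
            show "i < length U" by fact
            have "(a0 + (i - a0) mod p) mod p = (a0 + (i - a0)) mod p" by (simp add: mod_add_right_eq)
            then show "(a0 + (i - a0) mod p) mod p = i mod p" using F by simp
          qed
          finally show ?thesis by simp
        next
          case False
          have "\<not> i - a0 < k * p" using F False by linarith
          have "(H' @ concat (replicate k H) @ H'') ! i = H'' ! (i - a0 - k * p)"
            using F False Lk L_def lH \<open>\<not> i - a0 < k * p\<close> by (simp add: H'_def nth_append length_concat sum_list_replicate)
          also have "\<dots> = U ! i" using False i by (simp add: H''_def)
          finally show ?thesis by simp
        qed
      qed
    qed
    have d2: "strict_suffix H' H"
    proof -
      have "H' = drop (p - a0) H"
      proof (rule nth_equalityI)
        show "length H' = length (drop (p - a0) H)" using lH a0p L_def a0L by (simp add: H'_def)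
        fix i assume i: "i < length H'"
        then have ia: "i < a0" using a0L L_def by (simp add: H'_def)
        have "drop (p - a0) H ! i = H ! (p - a0 + i)" using lH ia a0p by simp
        also have "\<dots> = U ! (a0 + (p - a0 + i))" using Ha0 ia a0p by simp
        also have "\<dots> = U ! i"
        proof (rule hp_cong[OF hU])
          show "a0 + (p - a0 + i) < length U" using ia a0p L2 by linarith
          show "i < length U" using ia a0L L_def by simp
          have "a0 + (p - a0 + i) = i + p" using a0p by simp
          then show "(a0 + (p - a0 + i)) mod p = i mod p" by simp
        qed
        finally show "H' ! i = drop (p - a0) H ! i" using ia by (simp add: H'_def)
      qed
      then have "suffix H' H" unfolding suffix_def by (intro exI[of _ "take (p - a0) H"]) simp
      moreover have "H' \<noteq> H"
      proof
        assume "H' = H"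
        with \<open>H' = drop (p - a0) H\<close> have "length H = length (drop (p - a0) H)" by simp
        then show False using lH a0p p0 by simp
      qed
      ultimately show ?thesis unfolding strict_suffix_def by simp
    qed
    have d3: "strict_prefix H'' H"
    proof -
      have "H'' = take b H"
      proof (rule nth_equalityI)
        show "length H'' = length (take b H)" using Lk lH bp L_def by (simp add: H''_def)
        fix i assume i: "i < length H''"
        then have ib: "i < b" using Lk L_def by (simp add: H''_def)
        have "H'' ! i = U ! (a0 + k * p + i)" using i by (simp add: H''_def)
        also have "\<dots> = U ! (a0 + i)"
        proof (rule hp_cong[OF hU])
          show "a0 + k * p + i < length U" using ib Lk L_def by simp
          show "a0 + i < length U" using ib bp a0p L2 by linarith
          have "a0 + k * p + i = (a0 + i) + k * p" by simp
          then show "(a0 + k * p + i) mod p = (a0 + i) mod p" by (simp only: mod_mult_self1)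
        qed
        also have "\<dots> = take b H ! i" using Ha0 ib bp by simp
        finally show "H'' ! i = take b H ! i" .
      qed
      then have "prefix H'' H" unfolding prefix_def by (intro exI[of _ "drop b H"]) simp
      moreover have "H'' \<noteq> H"
      proof
        assume "H'' = H"
        with \<open>H'' = take b H\<close> have "length H = length (take b H)" by simp
        then show False using lH bp by simp
      qed
      ultimately show ?thesis unfolding strict_prefix_def by simp
    qed
    have d4: "l = length H''" using bl Lk L_def by (simp add: H''_def)
    show "\<exists>H' k H''. U = H' @ concat (replicate k H) @ H'' \<and> strict_suffix H' H \<and>
            strict_prefix H'' H \<and> l = length H''"
      by (rule exI[of _ H'], rule exI[of _ k], rule exI[of _ H'']) (intro conjI d1 d2 d3 d4)
  qed
qed


lemma sub_len: "1 \<le> i \<Longrightarrow> k \<le> length T + 1 \<Longrightarrow> i \<le> k \<Longrightarrow> length (sub T i k) = k - i"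
  unfolding sub_def by simp

lemma sub_sub: "1 \<le> i0 \<Longrightarrow> i0 \<le> i \<Longrightarrow> k \<le> k0 \<Longrightarrow> i \<le> k \<Longrightarrow>
  sub T i k = take (k - i) (drop (i - i0) (sub T i0 k0))"
  unfolding sub_def by (simp add: drop_take take_take min_def)

lemma take_drop_period: "hp U p \<Longrightarrow> t + 2 * p \<le> length U \<Longrightarrow> take p (drop t U) = take p (drop (t + p) U)"
proof (rule nth_equalityI)
  assume a: "hp U p" "t + 2 * p \<le> length U"
  then show "length (take p (drop t U)) = length (take p (drop (t + p) U))" by simp
  fix i assume "i < length (take p (drop t U))"
  then have i: "i < p" by simp
  have "U ! (t + i) = U ! (t + i + p)" using hp_at[OF a(1), of "t + i"] a(2) i by simp
  then show "take p (drop t U) ! i = take p (drop (t + p) U) ! i" using i a(2)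
    by (simp add: add.commute add.left_commute)
qed

lemma the_iff: "(\<And>l. P l \<longleftrightarrow> l = c) \<Longrightarrow> (THE l. P l) = c"
  by simp


theorem lemma5p12:
  fixes T :: "nat list" and \<sigma> n \<tau> :: nat and \<mu> :: real
  assumes "n = length T"
    and "\<forall>c \<in> set T. c < \<sigma>"
    and "2 \<le> \<sigma>" and "real \<sigma> < real n powr (1/7)"
    and "0 < \<mu>" and "\<mu> < 1/6"
    and "\<tau> = nat \<lfloor>\<mu> * log (real \<sigma>) (real n)\<rfloor>" and "1 \<le> \<tau>"
    and "j \<in> Rset T \<tau> - Rprime T \<tau>"
  shows "Lroot T \<tau> (j - 1) = Lroot T \<tau> j \<and>
         run_end T \<tau> (j - 1) = run_end T \<tau> j \<and>
         Ltail T \<tau> (j - 1) = Ltail T \<tau> j \<and>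
         efull T \<tau> (j - 1) = efull T \<tau> j \<and>
         rtype T \<tau> (j - 1) = rtype T \<tau> j"
proof -
  define R where "R = Rset T \<tau>"
  define W where "W = 3 * \<tau> - 1"
  have tau1: "1 \<le> \<tau>" by fact
  have W2: "2 \<le> W" using tau1 by (simp add: W_def)
  have Rmem: "\<And>i. i \<in> R \<longleftrightarrow> 1 \<le> i \<and> i + 3 * \<tau> \<le> length T + 2 \<and>
      real (per (sub T i (i + W))) \<le> real \<tau> / 3"
    unfolding R_def Rset_def W_def using tau1 by (simp add: add.commute add.left_commute)
  have jR: "j \<in> R" and j1R: "j - 1 \<in> R" using assms(9) unfolding R_def Rprime_def by auto
  have j2: "2 \<le> j" using j1R Rmem by fastforce
  have perR: "\<And>i. i \<in> R \<Longrightarrow> 3 * per (sub T i (i + W)) \<le> \<tau>"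
  proof -
    fix i assume "i \<in> R"
    then have "real (per (sub T i (i + W))) \<le> real \<tau> / 3" using Rmem by blast
    then have "real (3 * per (sub T i (i + W))) \<le> real \<tau>" by simp
    then show "3 * per (sub T i (i + W)) \<le> \<tau>" by linarith
  qed
  define J where "J = (LEAST j'. j \<le> j' \<and> j' \<notin> R)"
  have exJ: "j \<le> length T + 3 \<and> length T + 3 \<notin> R" using jR Rmem by auto
  have J1: "j \<le> J \<and> J \<notin> R" unfolding J_def by (rule LeastI[of _ "length T + 3"]) (rule exJ)
  have J2: "\<And>i. j \<le> i \<Longrightarrow> i < J \<Longrightarrow> i \<in> R"
    unfolding J_def using not_less_Least by blast
  have Jj: "j < J" using J1 jR by (cases "J = j") auto
  have J1R: "J - 1 \<in> R" using J2[of "J - 1"] Jj by simp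
  have Jlen: "J - 1 + 3 * \<tau> \<le> length T + 2" using J1R Rmem by blast
  define e where "e = J + 3 * \<tau> - 2"
  have ej: "run_end T \<tau> j = e" unfolding run_end_def e_def J_def R_def by simp
  have ej1: "run_end T \<tau> (j - 1) = e"
  proof -
    have "(\<lambda>j'. j - 1 \<le> j' \<and> j' \<notin> R) = (\<lambda>j'. j \<le> j' \<and> j' \<notin> R)"
    proof (rule ext)
      fix j' show "(j - 1 \<le> j' \<and> j' \<notin> R) = (j \<le> j' \<and> j' \<notin> R)"
        using j1R j2 by (cases "j' = j - 1") auto
    qed
    then show ?thesis unfolding run_end_def e_def J_def R_def by simp
  qed
  define U where "U = sub T (j - 1) e"
  define M where "M = J - j"
  define L where "L = length U"
  have eW: "e = J - 1 + W" using Jj tau1 by (simp add: e_def W_def)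
  have lenU: "L = M + W" unfolding L_def U_def M_def
    using sub_len[of "j - 1" e T] j2 Jlen eW Jj tau1 by (simp add: W_def)
  have lenU': "length U = M + W" using lenU by (simp add: L_def)
  define win where "win s = take W (drop s U)" for s
  have winsub: "\<And>s. s \<le> M \<Longrightarrow> sub T (j - 1 + s) (j - 1 + s + W) = win s"
  proof -
    fix s assume s: "s \<le> M"
    have "sub T (j - 1 + s) (j - 1 + s + W) = take W (drop s (sub T (j - 1) e))"
      using sub_sub[of "j - 1" "j - 1 + s" "j - 1 + s + W" e T] j2 s eW Jj by (simp add: M_def)
    then show "sub T (j - 1 + s) (j - 1 + s + W) = win s" by (simp add: win_def U_def)
  qed
  have winR: "\<And>s. s \<le> M \<Longrightarrow> j - 1 + s \<in> R"
  proof -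
    fix s assume s: "s \<le> M"
    show "j - 1 + s \<in> R"
    proof (cases s)
      case 0 then show ?thesis using j1R by simp
    next
      case (Suc s') then show ?thesis using J2[of "j - 1 + s"] s j2 by (simp add: M_def)
    qed
  qed
  have perw: "\<And>s. s \<le> M \<Longrightarrow> 3 * per (win s) \<le> \<tau>"
  proof -
    fix s assume s: "s \<le> M"
    show "3 * per (win s) \<le> \<tau>" using perR[OF winR[OF s]] unfolding winsub[OF s] .
  qed
  have lenw: "\<And>s. s \<le> M \<Longrightarrow> length (win s) = W" using lenU by (simp add: win_def L_def)
  have pereq: "\<And>s. s \<le> M \<Longrightarrow> per (win s) = per (win 0)"
  proof -
    fix s show "s \<le> M \<Longrightarrow> per (win s) = per (win 0)"
    proof (induction s)
      case 0 then show ?case by simp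
    next
      case (Suc s)
      define V where "V = take (Suc W) (drop s U)"
      have lV: "length V = Suc W" using Suc.prems lenU by (simp add: V_def L_def)
      have tV: "take W V = win s" by (simp add: V_def win_def min_def)
      have dV: "drop 1 V = win (Suc s)" by (simp add: V_def win_def drop_take)
      have "per (take W V) = per (drop 1 V)"
      proof (rule adj[OF lV _ _ W2])
        show "2 * per (take W V) + 1 \<le> W" using perw[of s] Suc.prems tV tau1 by (simp add: W_def)
        show "2 * per (drop 1 V) + 1 \<le> W" using perw[of "Suc s"] Suc.prems dV tau1 by (simp add: W_def)
      qed
      then show ?case using tV dV Suc by simp
    qed
  qed
  define p where "p = per (win 0)"
  have M1: "1 \<le> M" using Jj by (simp add: M_def)
  have p0: "0 < p" using per_props(1)[of "win 0"] lenw[of 0] W2 by (simp add: p_def)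
  have hpw: "\<And>s. s \<le> M \<Longrightarrow> hp (win s) p"
  proof -
    fix s assume s: "s \<le> M"
    have "hp (win s) (per (win s))" using per_props(2)[of "win s"] lenw[OF s] W2 by simp
    then show "hp (win s) p" unfolding pereq[OF s] p_def .
  qed
  have minw: "\<And>s d. s \<le> M \<Longrightarrow> 0 < d \<Longrightarrow> hp (win s) d \<Longrightarrow> p \<le> d"
  proof -
    fix s d assume a: "s \<le> M" "0 < d" "hp (win s) d"
    have "1 \<le> length (win s)" using lenw[OF a(1)] W2 by simp
    then have "per (win s) \<le> d" using per_props(3)[of "win s" d] a by simp
    then show "p \<le> d" using pereq[OF a(1)] by (simp add: p_def)
  qed
  have p3: "3 * p \<le> \<tau>" using perw[of 0] by (simp add: p_def)
  have pW: "9 * p \<le> W + 1" using p3 tau1 by (simp add: W_def)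
  have hU: "hp U p"
    by (rule union[OF lenU']) (use pW p0 hpw in \<open>auto simp: win_def\<close>)
  have L3: "3 * p \<le> L" using lenU pW p0 by simp
  have ejL: "e = j - 1 + L" using eW lenU Jj j2 by (simp add: M_def)
  have L3': "3 * p \<le> length U" using L3 by (simp add: L_def)
  have nominU: "\<And>d. 0 < d \<Longrightarrow> d < p \<Longrightarrow> \<not> hp U d"
  proof
    fix d assume d: "0 < d" "d < p" "hp U d"
    then have "hp (win 0) d" by (simp add: win_def hp_take)
    then show False using minw[of 0 d] d by simp
  qed
  define U2 where "U2 = drop 1 U"
  have U2sub: "sub T j e = U2"
    using sub_sub[of "j - 1" j e e T] j2 eW Jj lenU unfolding U2_def U_def L_def
    by (simp add: M_def)
  have hU2: "hp U2 p" using hp_drop[OF hU] by (simp add: U2_def)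
  have nominU2: "\<And>d. 0 < d \<Longrightarrow> d < p \<Longrightarrow> \<not> hp U2 d"
  proof
    fix d assume d: "0 < d" "d < p" "hp U2 d"
    then have "hp (win 1) d" by (simp add: win_def hp_take U2_def)
    then show False using minw[of 1 d] d M1 by simp
  qed
  define g where "g t = take p (drop t U)" for t
  have gper: "\<And>t. t < p \<Longrightarrow> g t = g (t + p)"
    unfolding g_def using take_drop_period[OF hU] L3' by simp
  have A0: "{sub T (j - 1 + t) (j - 1 + t + p) | t. t < p} = g ` {..<p}"
  proof -
    have "\<And>t. t < p \<Longrightarrow> sub T (j - 1 + t) (j - 1 + t + p) = g t"
    proof -
      fix t assume t: "t < p"
      have "sub T (j - 1 + t) (j - 1 + t + p) = take (j - 1 + t + p - (j - 1 + t)) (drop (j - 1 + t - (j - 1)) U)"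
        unfolding U_def by (rule sub_sub) (use j2 ejL t L3 in auto)
      then show "sub T (j - 1 + t) (j - 1 + t + p) = g t" by (simp add: g_def)
    qed
    note eq = this
    show ?thesis
    proof (intro set_eqI iffI)
      fix y assume "y \<in> {sub T (j - 1 + t) (j - 1 + t + p) | t. t < p}"
      then obtain t where t: "t < p" "y = sub T (j - 1 + t) (j - 1 + t + p)" by blast
      then show "y \<in> g ` {..<p}" using eq[OF t(1)] by simp
    next
      fix y assume "y \<in> g ` {..<p}"
      then obtain t where t: "t < p" "y = g t" by auto
      then have "y = sub T (j - 1 + t) (j - 1 + t + p)" using eq[OF t(1)] by simp
      then show "y \<in> {sub T (j - 1 + t) (j - 1 + t + p) | t. t < p}" using t(1) by blast
    qed
  qed
  have A1: "{sub T (j + t) (j + t + p) | t. t < p} = g ` {1..<p+1}"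
  proof -
    have "\<And>t. t < p \<Longrightarrow> sub T (j + t) (j + t + p) = g (t + 1)"
    proof -
      fix t assume t: "t < p"
      have "sub T (j + t) (j + t + p) = take (j + t + p - (j + t)) (drop (j + t - (j - 1)) U)"
        unfolding U_def by (rule sub_sub) (use j2 ejL t L3 in auto)
      moreover have "j + t - (j - 1) = t + 1" using j2 by simp
      ultimately show "sub T (j + t) (j + t + p) = g (t + 1)" by (simp add: g_def)
    qed
    note eq = this
    have "{sub T (j + t) (j + t + p) | t. t < p} = (\<lambda>t. g (t + 1)) ` {..<p}"
    proof (intro set_eqI iffI)
      fix y assume "y \<in> {sub T (j + t) (j + t + p) | t. t < p}"
      then obtain t where t: "t < p" "y = sub T (j + t) (j + t + p)" by blast
      then show "y \<in> (\<lambda>t. g (t + 1)) ` {..<p}" using eq[OF t(1)] by simp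
    next
      fix y assume "y \<in> (\<lambda>t. g (t + 1)) ` {..<p}"
      then obtain t where t: "t < p" "y = g (t + 1)" by auto
      then have "y = sub T (j + t) (j + t + p)" using eq[OF t(1)] by simp
      then show "y \<in> {sub T (j + t) (j + t + p) | t. t < p}" using t(1) by blast
    qed
    also have "\<dots> = g ` {1..<p+1}"
    proof -
      have s1: "(\<lambda>t. t + 1) ` {..<p} = {1..<p+1}"
        using image_add_atLeastLessThan[of 1 0 p] by (simp add: lessThan_atLeast0)
      show ?thesis unfolding s1[symmetric] image_image ..
    qed
    finally show ?thesis .
  qed
  have gimg: "g ` {..<p} = g ` {1..<p+1}"
  proof
    show "g ` {..<p} \<subseteq> g ` {1..<p+1}"
    proof
      fix y assume "y \<in> g ` {..<p}"
      then obtain t where t: "t < p" "y = g t" by auto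
      show "y \<in> g ` {1..<p+1}"
      proof (cases t)
        case 0 then show ?thesis using t gper[of 0] p0 by auto
      next
        case (Suc t') then show ?thesis using t by auto
      qed
    qed
    show "g ` {1..<p+1} \<subseteq> g ` {..<p}"
    proof
      fix y assume "y \<in> g ` {1..<p+1}"
      then obtain t where t: "1 \<le> t" "t < p + 1" "y = g t" by auto
      show "y \<in> g ` {..<p}"
      proof (cases "t = p")
        case True
        then have "y = g 0" using t gper[of 0] p0 by simp
        then show ?thesis using p0 by simp
      next
        case False then show ?thesis using t by auto
      qed
    qed
  qed
  have w0: "sub T (j - 1) (j - 1 + 3 * \<tau> - 1) = win 0" using winsub[of 0] tau1 by (simp add: W_def)
  have w1: "sub T j (j + 3 * \<tau> - 1) = win 1" using winsub[of 1] tau1 M1 j2 by (simp add: W_def)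
  have pw1: "per (win 1) = p" using pereq[of 1] M1 by (simp add: p_def)
  have LR1: "Lroot T \<tau> (j - 1) = Min (g ` {..<p})"
    unfolding Lroot_def Let_def w0 p_def[symmetric] A0 ..
  have LR2: "Lroot T \<tau> j = Min (g ` {..<p})"
    unfolding Lroot_def Let_def w1 pw1 A1 gimg ..
  define H where "H = Min (g ` {..<p})"
  have "H \<in> g ` {..<p}" unfolding H_def by (rule Min_in) (use p0 in auto)
  then obtain t where t: "t < p" "H = take p (drop t U)" by (auto simp: g_def)
  have LT1: "Ltail T \<tau> (j - 1) = (L - t) mod p"
    unfolding Ltail_def ej1 LR1 H_def[symmetric] U_def[symmetric] L_def
    by (rule the_iff, rule decomp[OF hU p0 _ _ nominU t(2)]) (use L3 t in \<open>auto simp: L_def\<close>)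
  have HU2: "H = take p (drop (t + p - 1) U2)"
    using t gper[of t] p0 unfolding g_def U2_def by simp
  have LT2: "Ltail T \<tau> j = (L - t) mod p"
  proof -
    have "Ltail T \<tau> j = (length U2 - (t + p - 1)) mod p"
      unfolding Ltail_def ej LR2 H_def[symmetric] U2sub
      by (rule the_iff, rule decomp[OF hU2 p0 _ _ nominU2 HU2]) (use L3 t p0 in \<open>auto simp: L_def U2_def\<close>)
    also have "length U2 - (t + p - 1) = L - t - p" using L3 t p0 by (simp add: U2_def L_def)
    also have "(L - t - p) mod p = (L - t) mod p"
    proof -
      have e: "L - t = (L - t - p) + p" using L3 t by simp
      show ?thesis using e mod_add_self2[of "L - t - p" p] by simp
    qed
    finally show ?thesis .
  qed
  have LR: "Lroot T \<tau> (j - 1) = Lroot T \<tau> j" using LR1 LR2 by simp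
  have RE: "run_end T \<tau> (j - 1) = run_end T \<tau> j" using ej ej1 by simp
  have LT: "Ltail T \<tau> (j - 1) = Ltail T \<tau> j" using LT1 LT2 by simp
  have EF: "efull T \<tau> (j - 1) = efull T \<tau> j" unfolding efull_def RE LT ..
  have TY: "rtype T \<tau> (j - 1) = rtype T \<tau> j" unfolding rtype_def RE LR ..
  show ?thesis using LR RE LT EF TY by simp
qed

end
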